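(* Consider the discrete-time system $x_{k+1}=f(x_k,u_k,w_k)$, $y_k=h(x_k,v_k)$ with $x_k\in\mathbb{X}\subset\mathbb{R}^n$, $u_k\in\mathbb{U}\subseteq\mathbb{R}^m$, $w_k\in\mathbb{R}^q$, $v_k\in\mathbb{V}\subset\mathbb{R}^r$, $y_k\in\mathbb{Y}\subset\mathbb{R}^p$, $f,h$ continuously differentiable, $\mathbb{Z}:=\mathbb{X}\times\mathbb{U}\times\mathbb{R}^q\times\mathbb{V}\times\mathbb{Y}$, and suppose it is strongly nonlinearly detectable. Let $\alpha_1,\alpha_2\in\mathcal{K}_\infty$, $\sigma_v,\sigma_y\in\mathcal{K}$, $\mu\in(0,1)$ and $V:\mathbb{X}\times\mathbb{X}\to\mathbb{R}_{\ge0}$ satisfy $\alpha_1(\|x-\widetilde{x}\|)\le V(x,\widetilde{x})\le\alpha_2(\|x-\widetilde{x}\|)$ and $V(f(x,u,w),f(\widetilde{x},u,\widetilde{w}))\le\mu V(x,\widetilde{x})+\sigma_v(\|v-\widetilde{v}\|)+\sigma_v(\|v^+-\widetilde{v}^+\|)+\sigma_y(\|y-\widetilde{y}\|)+\sigma_y(\|y^+-\widetilde{y}^+\|)$ for all $(x,u,w,v,y),(\widetilde{x},u,\widetilde{w},\widetilde{v},\widetilde{y})\in\mathbb{Z}$, $v^+,\widetilde{v}^+\in\mathbb{V}$ with $y=h(x,v)$, $\widetilde{y}=h(\widetilde{x},\widetilde{v})$, $y^+=h(f(x,u,w),v^+)\in\mathbb{Y}$, $\widetilde{y}^+=h(f(\widetilde{x},u,\widetilde{w}),\widetilde{v}^+)\in\mathbb{Y}$.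 Fix a horizon $N\in\mathbb{N}$, let $N_k:=\min(N,k)$, and define the moving horizon estimator $MHE_{N_k}$: given priors $\bar{x}_0\in\mathbb{X}$ and $\bar{v}_i\in\mathbb{V}$, at each $k\ge0$ minimize $$\mu^{N_k}\alpha_2(2\|\hat{x}_{k-N_k|k}-\hat{x}_{k-N_k}\|)+\sum_{j=0}^{N_k}2\mu^{j-1}\sigma_v(2\|\hat{v}_{k-j|k}-\bar{v}_{k-j}\|)+\sum_{j=0}^{N_k}2\mu^{j-1}\sigma_y(\|y_{k-j}-\hat{y}_{k-j|k}\|)$$ over $\hat{x}_{k-N_k|k}$, $(\hat{v}_{j|k})$, $(\hat{w}_{j|k})$ subject to $\hat{x}_{j+1|k}=f(\hat{x}_{j|k},u_j,\hat{w}_{j|k})$ for $j\in\{k-N_k,\dots,k-1\}$ and $\hat{y}_{j|k}=h(\hat{x}_{j|k},\hat{v}_{j|k})$, $\hat{x}_{j|k}\in\mathbb{X}$, $\hat{v}_{j|k}\in\mathbb{V}$, $\hat{w}_{j|k}\in\mathbb{R}^q$, $\hat{y}_{j|k}\in\mathbb{Y}$ for $j\in\{k-N_k,\dots,k\}$; the estimate is $\hat{x}^\star_{k|k}$ from an optimal solution, and the priors are $\hat{x}_0:=\bar{x}_0$ and $\hat{x}_k:=\hat{x}^\star_{k|k}$ for $k>0$. If $N$ is such that there is $\rho\in(0,1)$ with $$2\mu^N\alpha_2\big(2\alpha_1^{-1}(r)\big)<\rho r\quad\text{for all } r\in(0,\infty),$$ then $MHE_{N_k}$ is an unknown input state esti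mator.
   Context: A solution of the system is a sequence in $\mathbb{Z}^\infty$ satisfying the system equations. $\mathcal{K}$, $\mathcal{K}_\infty$, $\mathcal{KL}$ are the usual comparison function classes; a $\mathcal{KL}$-function $\beta$ is summable if there is $\alpha\in\mathcal{K}$ with $\sum_{k\ge0}\beta(r,k)\le\alpha(r)$ for all $r\ge0$. Strong nonlinear detectability: there exist $\alpha\in\mathcal{K}_\infty$, $\alpha_0\in\mathcal{KL}$, summable $\alpha_v,\alpha_y\in\mathcal{KL}$ with $\alpha(\|x_k-\widetilde{x}_k\|)\le\alpha_0(\|x_0-\widetilde{x}_0\|,k)+\sum_{i=0}^k(\alpha_v(\|v_{k-i}-\widetilde{v}_{k-i}\|,i)+\alpha_y(\|y_{k-i}-\widetilde{y}_{k-i}\|,i))$ for all $k\ge0$ and all pairs of solutions sharing the same control input sequence. A state estimator is a sequence of maps $\hat{x}_k=\Psi_k(\bar{x}_0,\bar{\boldsymbol{v}}_{[0,k]},\boldsymbol{u}_{[0,k-1]},\boldsymbol{y}_{[0,k]})$; it is an unknown input state estimator if there exist $\beta\in\mathcal{K}_\infty$, $\beta_0\in\mathcal{KL}$ and a summable $\beta_v\in\mathcal{KL}$ such that $\beta(\|x_k-\hat{x}_k\|)\le\beta_0(\|x_0-\bar{x}_0\|,k)+\sum_{i=0}^k\beta_v(\|v_{k-i}-\bar{v}_{k-i}\|,i)$ for all $k\ge0$, all priors and every trajectory of the system. *)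

theory Defs
  imports "HOL-Analysis.Analysis"
begin

definition class_K :: "(real \<Rightarrow> real) \<Rightarrow> bool" where
  "class_K \<alpha> \<longleftrightarrow> continuous_on {0..} \<alpha> \<and> \<alpha> 0 = 0 \<and> strict_mono_on {0..} \<alpha>"

definition class_Kinf :: "(real \<Rightarrow> real) \<Rightarrow> bool" where
  "class_Kinf \<alpha> \<longleftrightarrow> class_K \<alpha> \<and> filterlim \<alpha> at_top at_top"

definition class_KL :: "(real \<Rightarrow> nat \<Rightarrow> real) \<Rightarrow> bool" where
  "class_KL \<beta> \<longleftrightarrow> (\<forall>k. class_K (\<lambda>r. \<beta> r k)) \<and>
     (\<forall>r\<ge>0. antimono (\<beta> r) \<and> (\<beta> r \<longlonglongrightarrow> 0))"

definition summable_KL :: "(real \<Rightarrow> nat \<Rightarrow> real) \<Rightarrow> bool" where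
  "summable_KL \<beta> \<longleftrightarrow> class_KL \<beta> \<and>
     (\<exists>\<alpha>. class_K \<alpha> \<and> (\<forall>r\<ge>0. summable (\<beta> r) \<and> (\<Sum>k. \<beta> r k) \<le> \<alpha> r))"

definition C1_fun :: "('a::real_normed_vector \<Rightarrow> 'b::real_normed_vector) \<Rightarrow> bool" where
  "C1_fun F \<longleftrightarrow> (\<exists>F'. (\<forall>z. (F has_derivative blinfun_apply (F' z)) (at z)) \<and> continuous_on UNIV F')"

definition is_solution ::
  "('x \<Rightarrow> 'u \<Rightarrow> 'w \<Rightarrow> 'x) \<Rightarrow> ('x \<Rightarrow> 'v \<Rightarrow> 'y) \<Rightarrow> 'x set \<Rightarrow> 'u set \<Rightarrow> 'v set \<Rightarrow> 'y set \<Rightarrow>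
   (nat \<Rightarrow> 'x) \<Rightarrow> (nat \<Rightarrow> 'u) \<Rightarrow> (nat \<Rightarrow> 'w) \<Rightarrow> (nat \<Rightarrow> 'v) \<Rightarrow> (nat \<Rightarrow> 'y) \<Rightarrow> bool" where
  "is_solution f h X U V Y x u w v y \<longleftrightarrow>
     (\<forall>k. x k \<in> X \<and> u k \<in> U \<and> v k \<in> V \<and> y k \<in> Y \<and>
          x (Suc k) = f (x k) (u k) (w k) \<and> y k = h (x k) (v k))"

definition strongly_nl_detectable ::
  "('x::real_normed_vector \<Rightarrow> 'u \<Rightarrow> 'w \<Rightarrow> 'x) \<Rightarrow> ('x \<Rightarrow> 'v::real_normed_vector \<Rightarrow> 'y::real_normed_vector) \<Rightarrow>
   'x set \<Rightarrow> 'u set \<Rightarrow> 'v set \<Rightarrow> 'y set \<Rightarrow> bool" where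
  "strongly_nl_detectable f h X U V Y \<longleftrightarrow>
     (\<exists>\<alpha> \<alpha>0 \<alpha>v \<alpha>y. class_Kinf \<alpha> \<and> class_KL \<alpha>0 \<and> summable_KL \<alpha>v \<and> summable_KL \<alpha>y \<and>
       (\<forall>x u w v y x' w' v' y'.
          is_solution f h X U V Y x u w v y \<longrightarrow> is_solution f h X U V Y x' u w' v' y' \<longrightarrow>
          (\<forall>k. \<alpha> (norm (x k - x' k)) \<le> \<alpha>0 (norm (x 0 - x' 0)) k +
                (\<Sum>i\<le>k. \<alpha>v (norm (v (k - i) - v' (k - i))) i + \<alpha>y (norm (y (k - i) - y' (k - i))) i))))"

text \<open>Decision variables at time k are given as functions of absolute time j
  (only j in {k - N_k..k} matter): xs (state; only xs (k-N_k) is free, the rest is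
  determined by the dynamics), vs and ws.\<close>

definition mhe_feasible ::
  "('x \<Rightarrow> 'u \<Rightarrow> 'w \<Rightarrow> 'x) \<Rightarrow> ('x \<Rightarrow> 'v \<Rightarrow> 'y) \<Rightarrow> 'x set \<Rightarrow> 'v set \<Rightarrow> 'y set \<Rightarrow>
   nat \<Rightarrow> nat \<Rightarrow> (nat \<Rightarrow> 'u) \<Rightarrow> (nat \<Rightarrow> 'x) \<Rightarrow> (nat \<Rightarrow> 'v) \<Rightarrow> (nat \<Rightarrow> 'w) \<Rightarrow> bool" where
  "mhe_feasible f h X V Y N k u xs vs ws \<longleftrightarrow>
     (\<forall>j\<in>{k - min N k..<k}. xs (Suc j) = f (xs j) (u j) (ws j)) \<and>
     (\<forall>j\<in>{k - min N k..k}. xs j \<in> X \<and> vs j \<in> V \<and> h (xs j) (vs j) \<in> Y)"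

definition mhe_cost ::
  "('x::real_normed_vector \<Rightarrow> 'v::real_normed_vector \<Rightarrow> 'y::real_normed_vector) \<Rightarrow>
   real \<Rightarrow> (real \<Rightarrow> real) \<Rightarrow> (real \<Rightarrow> real) \<Rightarrow> (real \<Rightarrow> real) \<Rightarrow>
   nat \<Rightarrow> nat \<Rightarrow> 'x \<Rightarrow> (nat \<Rightarrow> 'v) \<Rightarrow> (nat \<Rightarrow> 'y) \<Rightarrow> (nat \<Rightarrow> 'x) \<Rightarrow> (nat \<Rightarrow> 'v) \<Rightarrow> real" where
  "mhe_cost h \<mu> \<alpha>2 \<sigma>v \<sigma>y N k prior vbar y xs vs =
     \<mu> ^ (min N k) * \<alpha>2 (2 * norm (xs (k - min N k) - prior)) +
     (\<Sum>j\<le>min N k. 2 * \<mu> powi (int j - 1) * \<sigma>v (2 * norm (vs (k - j) - vbar (k - j)))) +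
     (\<Sum>j\<le>min N k. 2 * \<mu> powi (int j - 1) * \<sigma>y (norm (y (k - j) - h (xs (k - j)) (vs (k - j)))))"

definition mhe_estimates ::
  "('x::real_normed_vector \<Rightarrow> 'u \<Rightarrow> 'w \<Rightarrow> 'x) \<Rightarrow> ('x \<Rightarrow> 'v::real_normed_vector \<Rightarrow> 'y::real_normed_vector) \<Rightarrow>
   'x set \<Rightarrow> 'v set \<Rightarrow> 'y set \<Rightarrow>
   real \<Rightarrow> (real \<Rightarrow> real) \<Rightarrow> (real \<Rightarrow> real) \<Rightarrow> (real \<Rightarrow> real) \<Rightarrow> nat \<Rightarrow>
   'x \<Rightarrow> (nat \<Rightarrow> 'v) \<Rightarrow> (nat \<Rightarrow> 'u) \<Rightarrow> (nat \<Rightarrow> 'y) \<Rightarrow> (nat \<Rightarrow> 'x) \<Rightarrow> bool" where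
  "mhe_estimates f h X V Y \<mu> \<alpha>2 \<sigma>v \<sigma>y N xbar0 vbar u y xhat \<longleftrightarrow>
     (\<forall>k. let prior = (if k - min N k = 0 then xbar0 else xhat (k - min N k)) in
        (\<exists>xs vs ws. mhe_feasible f h X V Y N k u xs vs ws \<and>
           (\<forall>xs' vs' ws'. mhe_feasible f h X V Y N k u xs' vs' ws' \<longrightarrow>
              mhe_cost h \<mu> \<alpha>2 \<sigma>v \<sigma>y N k prior vbar y xs vs
                \<le> mhe_cost h \<mu> \<alpha>2 \<sigma>v \<sigma>y N k prior vbar y xs' vs') \<and>
           xhat k = xs k))"

end

theory Submission
  imports Defs
begin


lemma powi_conv: "(m::real) \<noteq> 0 \<Longrightarrow> m powi (int j - 1) = m ^ j / m"
  by (simp add: power_int_diff)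

lemma K_mono: "class_K a \<Longrightarrow> 0 \<le> r \<Longrightarrow> r \<le> s \<Longrightarrow> a r \<le> a s"
  unfolding class_K_def
  by (cases "r = s") (auto dest: strict_mono_onD[of "{0..}" a r s] intro: less_imp_le)

lemma K_nonneg: "class_K a \<Longrightarrow> 0 \<le> r \<Longrightarrow> 0 \<le> a r"
  using K_mono[of a 0 r] by (simp add: class_K_def)

lemma K_pos: "class_K a \<Longrightarrow> 0 < r \<Longrightarrow> 0 < a r"
  unfolding class_K_def using strict_mono_onD[of "{0..}" a 0 r] by auto

lemma K_sum: "class_K a \<Longrightarrow> 0 \<le> r \<Longrightarrow> 0 \<le> s \<Longrightarrow> a (r + s) \<le> a (2 * r) + a (2 * s)"
proof (cases "r \<le> s")
  case True
  assume K: "class_K a" "0 \<le> r" "0 \<le> s"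
  have "a (r+s) \<le> a (2 * s)" using K_mono[of a "r + s" "2 * s"] K True by auto
  moreover have "0 \<le> a (2 * r)" using K_nonneg[of a "2 * r"] K by auto
  ultimately show ?thesis by linarith
next
  case False
  assume K: "class_K a" "0 \<le> r" "0 \<le> s"
  have "a (r+s) \<le> a (2 * r)" using K_mono[of a "r + s" "2 * r"] K False by auto
  moreover have "0 \<le> a (2 * s)" using K_nonneg[of a "2 * s"] K by auto
  ultimately show ?thesis by linarith
qed

lemma K_tri: "class_K a \<Longrightarrow> norm (p - q) \<le> norm (p - c) + norm (q - c) \<Longrightarrow>
   a (norm (p - q)) \<le> a (2 * norm (p - c)) + a (2 * norm (q - c))"
proof -
  assume K: "class_K a" and n: "norm (p - q) \<le> norm (p - c) + norm (q - c)"
  have "a (norm (p - q)) \<le> a (norm (p - c) + norm (q - c))"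
    using K_mono[of a "norm (p - q)" "norm (p - c) + norm (q - c)"] K n by auto
  also have "\<dots> \<le> a (2 * norm (p - c)) + a (2 * norm (q - c))"
    using K_sum[of a "norm (p - c)" "norm (q - c)"] K by auto
  finally show ?thesis .
qed

lemma tri3: "norm ((p::'a::real_normed_vector) - q) \<le> norm (p - c) + norm (q - c)"
  using norm_triangle_ineq4[of "p - c" "q - c"] by simp

definition cc :: "real \<Rightarrow> nat \<Rightarrow> real" where
  "cc m j = (if j = 0 then 1 else m ^ (j - 1) * (1 + m))"

lemma chain:
  fixes Vs d :: "nat \<Rightarrow> real"
  assumes m: "0 < m" and d: "\<And>i. 0 \<le> d i"
    and step: "\<And>i. i < M \<Longrightarrow> Vs (t+i+1) \<le> m * Vs (t+i) + d (t+i) + d (t+i+1)"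
  shows "Vs (t+M) \<le> m^M * Vs t + (\<Sum>j\<le>M. cc m j * d (t+M-j))"
  using step
proof (induction M)
  case 0
  then show ?case using d[of t] by (simp add: cc_def)
next
  case (Suc M)
  have IH: "Vs (t+M) \<le> m^M * Vs t + (\<Sum>j\<le>M. cc m j * d (t+M-j))"
    using Suc by auto
  have st: "Vs (t+M+1) \<le> m * Vs (t+M) + d (t+M) + d (t+M+1)" using Suc by auto
  have e: "(\<Sum>j\<le>Suc M. cc m j * d (t + Suc M - j)) =
     d (t+M+1) + (\<Sum>j\<le>M. cc m (Suc j) * d (t+M-j))"
    by (subst sum.atMost_Suc_shift) (simp add: cc_def)
  have cs: "cc m (Suc j) = m * cc m j + (if j = 0 then 1 else 0)" for j
    by (cases j) (auto simp: cc_def algebra_simps)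
  have "(\<Sum>j\<le>M. cc m (Suc j) * d (t+M-j)) =
      m * (\<Sum>j\<le>M. cc m j * d (t+M-j)) + (\<Sum>j\<le>M. (if j = 0 then 1 else 0) * d (t+M-j))"
    by (simp add: cs distrib_right sum.distrib sum_distrib_left mult.assoc)
  also have "(\<Sum>j\<le>M. (if j = 0 then 1 else 0) * d (t+M-j)) = d (t+M)"
  proof -
    have "(\<Sum>j\<le>M. (if j = 0 then 1 else 0) * d (t+M-j)) = (\<Sum>j\<le>M. if j = 0 then d (t+M) else 0)"
      by (rule sum.cong) auto
    then show ?thesis by simp
  qed
  finally have "(\<Sum>j\<le>Suc M. cc m j * d (t + Suc M - j)) =
     d (t+M+1) + m * (\<Sum>j\<le>M. cc m j * d (t+M-j)) + d (t+M)" using e by simp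
  moreover have "m * Vs (t+M) \<le> m * (m^M * Vs t + (\<Sum>j\<le>M. cc m j * d (t+M-j)))"
    using IH m by (intro mult_left_mono) auto
  ultimately show ?case using st by (simp add: algebra_simps)
qed

lemma cc_le: "0 < m \<Longrightarrow> m < 1 \<Longrightarrow> cc m j \<le> 2 * (m ^ j / m)"
proof (cases j)
  case 0
  assume "0 < m" "m < 1" then show ?thesis using 0 by (simp add: cc_def field_simps)
next
  case (Suc i)
  assume m: "0 < m" "m < 1"
  have "m ^ i * m \<le> m ^ i * 1" using m by (intro mult_left_mono) auto
  then show ?thesis using Suc m by (simp add: cc_def field_simps)
qed

lemma cc_nonneg: "0 < m \<Longrightarrow> 0 \<le> cc m j"
  by (simp add: cc_def)



lemma split_sum_at:
  fixes g :: "nat \<Rightarrow> real"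
  assumes "N \<le> k"
  shows "(\<Sum>i\<le>k. g i) = (\<Sum>i<N. g i) + (\<Sum>i\<le>k - N. g (N + i))"
proof -
  have U: "{..k} = {..<N} \<union> (\<lambda>i. N + i) ` {..k - N}"
  proof
    show "{..k} \<subseteq> {..<N} \<union> (\<lambda>i. N + i) ` {..k - N}"
    proof
      fix i assume "i \<in> {..k}"
      then show "i \<in> {..<N} \<union> (\<lambda>i. N + i) ` {..k - N}"
        using assms by (cases "i < N") (auto intro!: image_eqI[of _ _ "i - N"])
    qed
  qed (use assms in auto)
  have "(\<Sum>i\<le>k. g i) = (\<Sum>i<N. g i) + (\<Sum>i\<in>(\<lambda>i. N + i) ` {..k - N}. g i)"
    unfolding U by (rule sum.union_disjoint) auto
  also have "(\<Sum>i\<in>(\<lambda>i. N + i) ` {..k - N}. g i) = (\<Sum>i\<le>k - N. g (N + i))"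
    by (subst sum.reindex) (auto simp: inj_on_def)
  finally show ?thesis .
qed

lemma recursion:
  fixes a s :: "nat \<Rightarrow> real" and m \<rho> l B E :: real
  assumes m: "0 < m" "m < 1" and rho: "0 < \<rho>" "\<rho> < 1" and E: "0 \<le> E"
    and s: "\<And>i. 0 \<le> s i"
    and l: "0 < l" "l < 1" "m \<le> l" "\<rho> \<le> l ^ Suc N"
    and B: "B = 4 / (m * l ^ N * (1 - l))"
    and base: "\<And>k. k \<le> N \<Longrightarrow> a k \<le> 2 * m ^ k * E + (\<Sum>j\<le>k. 4 * (m ^ j / m) * s (k - j))"
    and step: "\<And>k. N < k \<Longrightarrow> a k \<le> \<rho> * a (k - N) + (\<Sum>j\<le>N. 4 * (m ^ j / m) * s (k - j))"
  shows "a k \<le> 2 * l ^ k * E + (\<Sum>i\<le>k. B * l ^ i * s (k - i))"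
proof (induction k rule: less_induct)
  case (less k)
  have lN: "0 < l ^ N" "l ^ N \<le> 1" using l by (auto intro: power_le_one)
  have q: "0 < l ^ N * (1 - l)" "l ^ N * (1 - l) \<le> 1"
    using lN l by (auto simp: mult_le_one)
  have Bm: "4 / m \<le> B"
  proof -
    have "4 / m = 4 / (m * 1)" by simp
    also have "\<dots> \<le> 4 / (m * (l ^ N * (1 - l)))"
      using q m by (intro divide_left_mono mult_left_mono mult_pos_pos) (use lN l in auto)
    finally show ?thesis using B by (simp add: mult.assoc)
  qed
  have "0 < 4 / m" using m by simp
  then have Bpos: "0 < B" using Bm by linarith
  have rhoN: "\<rho> \<le> l ^ N"
  proof -
    have "l * l ^ N \<le> 1 * l ^ N" using l by (intro mult_right_mono) auto
    then show ?thesis using l(4) by simp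
  qed
  have coef: "4 * (m ^ j / m) \<le> B * l ^ j" for j
  proof -
    have "m ^ j \<le> l ^ j" using m l by (intro power_mono) auto
    then have "4 * (m ^ j / m) \<le> (4 / m) * l ^ j" using m by (simp add: divide_right_mono)
    also have "\<dots> \<le> B * l ^ j" using Bm l by (intro mult_right_mono) auto
    finally show ?thesis .
  qed
  have sumnn: "0 \<le> (\<Sum>i\<le>n. B * l ^ i * s (n - i))" for n
    using Bpos l s by (intro sum_nonneg) auto
  show ?case
  proof (cases "k \<le> N")
    case True
    have "a k \<le> 2 * m ^ k * E + (\<Sum>j\<le>k. 4 * (m ^ j / m) * s (k - j))" using base True .
    also have "\<dots> \<le> 2 * l ^ k * E + (\<Sum>i\<le>k. B * l ^ i * s (k - i))"
    proof (rule add_mono)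
      show "2 * m ^ k * E \<le> 2 * l ^ k * E"
        using m l E by (intro mult_right_mono mult_left_mono power_mono) auto
      show "(\<Sum>j\<le>k. 4 * (m ^ j / m) * s (k - j)) \<le> (\<Sum>i\<le>k. B * l ^ i * s (k - i))"
        using coef s by (intro sum_mono mult_right_mono) auto
    qed
    finally show ?thesis .
  next
    case False
    then have kN: "N < k" by simp
    show ?thesis
    proof (cases "N = 0")
      case True
      have "a k \<le> \<rho> * a k + 4 * (1 / m) * s k" using step[OF kN] True by simp
      then have "(1 - \<rho>) * a k \<le> 4 / m * s k" by (simp add: algebra_simps)
      then have ak: "a k \<le> 4 / (m * (1 - \<rho>)) * s k" using rho m
        by (simp add: field_simps)
      have "4 / (m * (1 - \<rho>)) \<le> B" using B True l rho m
        by (simp add: frac_le mult_left_mono)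
      then have "4 / (m * (1 - \<rho>)) * s k \<le> B * l ^ 0 * s (k - 0)"
        using s[of k] by (metis mult.right_neutral mult_right_mono power_0 diff_zero)
      also have "\<dots> \<le> (\<Sum>i\<le>k. B * l ^ i * s (k - i))"
        using Bpos l s by (intro member_le_sum[of 0 "{..k}" "\<lambda>i. B * l ^ i * s (k - i)"]) auto
      finally have "a k \<le> (\<Sum>i\<le>k. B * l ^ i * s (k - i))" using ak by linarith
      moreover have "0 \<le> 2 * l ^ k * E" using l E by simp
      ultimately show ?thesis by linarith
    next
      case False
      define n where "n = k - N"
      have nk: "n < k" using False kN n_def by simp
      have IH: "a n \<le> 2 * l ^ n * E + (\<Sum>i\<le>n. B * l ^ i * s (n - i))" using less nk by simp
      have st: "a k \<le> \<rho> * a n + ((\<Sum>j<N. 4 * (m ^ j / m) * s (k - j)) + 4 * (m ^ N / m) * s n)"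
        using step[OF kN] by (simp add: n_def lessThan_Suc_atMost[symmetric])
      have tgt: "(\<Sum>i\<le>k. B * l ^ i * s (k - i)) =
          (\<Sum>i<N. B * l ^ i * s (k - i)) + (\<Sum>i\<le>n. B * l ^ (N + i) * s (n - i))"
        using split_sum_at[of N k "\<lambda>i. B * l ^ i * s (k - i)"] kN by (simp add: n_def)
      have A1: "(\<Sum>j<N. 4 * (m ^ j / m) * s (k - j)) \<le> (\<Sum>i<N. B * l ^ i * s (k - i))"
        using coef s by (intro sum_mono mult_right_mono) auto
      have eq: "\<rho> * (\<Sum>i\<le>n. B * l ^ i * s (n - i)) + 4 * (m ^ N / m) * s n =
          (\<Sum>i\<le>n. (\<rho> * B * l ^ i + (if i = 0 then 4 * (m ^ N / m) else 0)) * s (n - i))"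
      proof -
        have "(\<Sum>i\<le>n. (if i = 0 then 4 * (m ^ N / m) else 0) * s (n - i)) =
            (\<Sum>i\<le>n. if i = 0 then 4 * (m ^ N / m) * s n else 0)"
          by (rule sum.cong) auto
        also have "\<dots> = 4 * (m ^ N / m) * s n" by simp
        finally show ?thesis
          by (simp add: distrib_right sum.distrib sum_distrib_left mult.assoc)
      qed
      have A2: "(\<Sum>i\<le>n. (\<rho> * B * l ^ i + (if i = 0 then 4 * (m ^ N / m) else 0)) * s (n - i))
          \<le> (\<Sum>i\<le>n. B * l ^ (N + i) * s (n - i))"
      proof (rule sum_mono)
        fix i assume "i \<in> {..n}"
        have c: "\<rho> * B * l ^ i + (if i = 0 then 4 * (m ^ N / m) else 0) \<le> B * l ^ (N + i)"
        proof (cases "i = 0")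
          case True
          have "m ^ N \<le> 1" using m by (simp add: power_le_one)
          then have "4 * (m ^ N / m) \<le> 4 / m" using m by (simp add: divide_right_mono)
          also have "4 / m = B * (l ^ N * (1 - l))"
          proof -
            have g: "x \<noteq> 0 \<Longrightarrow> 4 / (m * x) * x = 4 / m" for x using m by (simp add: field_simps)
            have "l ^ N * (1 - l) \<noteq> 0" using q(1) by (metis less_irrefl)
            then show ?thesis using g[of "l ^ N * (1 - l)"] B by (metis mult.assoc)
          qed
          also have "\<dots> = B * l ^ N - B * l ^ Suc N" by (simp add: algebra_simps)
          also have "\<dots> \<le> B * l ^ N - \<rho> * B" using l Bpos by (simp add: mult_left_mono)
          finally show ?thesis using True by (simp add: algebra_simps)
        next
          case False
          have "\<rho> \<le> l ^ N" by (rule rhoN)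
          then have "\<rho> * (B * l ^ i) \<le> l ^ N * (B * l ^ i)"
            using Bpos l by (intro mult_right_mono) auto
          then show ?thesis using False by (simp add: power_add algebra_simps)
        qed
        show "(\<rho> * B * l ^ i + (if i = 0 then 4 * (m ^ N / m) else 0)) * s (n - i)
            \<le> B * l ^ (N + i) * s (n - i)" using c s by (intro mult_right_mono) auto
      qed
      have "\<rho> * (2 * l ^ n * E) \<le> 2 * l ^ k * E"
      proof -
        have "\<rho> \<le> l ^ N" by (rule rhoN)
        then have "\<rho> * (l ^ n) \<le> l ^ N * l ^ n" using l by (intro mult_right_mono) auto
        also have "\<dots> = l ^ k" using n_def kN by (simp add: power_add[symmetric])
        finally have "\<rho> * l ^ n * E \<le> l ^ k * E" using E by (intro mult_right_mono)
        then show ?thesis by (simp add: mult.assoc mult.left_commute)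
      qed
      have "a k \<le> \<rho> * (2 * l ^ n * E + (\<Sum>i\<le>n. B * l ^ i * s (n - i)))
          + ((\<Sum>j<N. 4 * (m ^ j / m) * s (k - j)) + 4 * (m ^ N / m) * s n)"
        using st mult_left_mono[OF IH, of \<rho>] rho by linarith
      moreover have "\<rho> * (2 * l ^ n * E + (\<Sum>i\<le>n. B * l ^ i * s (n - i))) =
         \<rho> * (2 * l ^ n * E) + \<rho> * (\<Sum>i\<le>n. B * l ^ i * s (n - i))"
        by (simp add: distrib_left)
      ultimately show ?thesis using tgt A1 A2 eq \<open>\<rho> * (2 * l ^ n * E) \<le> 2 * l ^ k * E\<close>
        by linarith
    qed
  qed
qed



lemma window:
  fixes f :: "'x::real_normed_vector \<Rightarrow> 'u \<Rightarrow> 'w \<Rightarrow> 'x"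
    and h :: "'x \<Rightarrow> 'v::real_normed_vector \<Rightarrow> 'y::real_normed_vector"
    and X :: "'x set" and U :: "'u set" and V :: "'v set" and Y :: "'y set"
    and Vf :: "'x \<Rightarrow> 'x \<Rightarrow> real"
    and \<alpha>1 \<alpha>2 \<sigma>v \<sigma>y :: "real \<Rightarrow> real" and \<mu> :: real and N :: nat
  assumes \<alpha>1: "class_K \<alpha>1" and \<alpha>2: "class_K \<alpha>2"
    and \<sigma>v: "class_K \<sigma>v" and \<sigma>y: "class_K \<sigma>y"
    and \<mu>: "0 < \<mu>" "\<mu> < 1"
    and VB: "\<forall>x x'. x \<in> X \<longrightarrow> x' \<in> X \<longrightarrow>
          \<alpha>1 (norm (x - x')) \<le> Vf x x' \<and> Vf x x' \<le> \<alpha>2 (norm (x - x'))"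
    and VD: "\<forall>x u w v y x' w' v' y' vp vp'.
          x \<in> X \<longrightarrow> u \<in> U \<longrightarrow> v \<in> V \<longrightarrow> y \<in> Y \<longrightarrow>
          x' \<in> X \<longrightarrow> v' \<in> V \<longrightarrow> y' \<in> Y \<longrightarrow> vp \<in> V \<longrightarrow> vp' \<in> V \<longrightarrow>
          y = h x v \<longrightarrow> y' = h x' v' \<longrightarrow>
          h (f x u w) vp \<in> Y \<longrightarrow> h (f x' u w') vp' \<in> Y \<longrightarrow>
          Vf (f x u w) (f x' u w') \<le> \<mu> * Vf x x' + \<sigma>v (norm (v - v')) + \<sigma>v (norm (vp - vp'))
             + \<sigma>y (norm (y - y')) + \<sigma>y (norm (h (f x u w) vp - h (f x' u w') vp'))"
    and sol: "is_solution f h X U V Y x u w v y"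
    and feas: "mhe_feasible f h X V Y N k u xs vs ws"
    and OP: "\<forall>xs' vs' ws'. mhe_feasible f h X V Y N k u xs' vs' ws' \<longrightarrow>
        mhe_cost h \<mu> \<alpha>2 \<sigma>v \<sigma>y N k p vbar y xs vs \<le> mhe_cost h \<mu> \<alpha>2 \<sigma>v \<sigma>y N k p vbar y xs' vs'"
  shows "\<alpha>1 (norm (x k - xs k)) \<le> 2 * \<mu> ^ min N k * \<alpha>2 (2 * norm (x (k - min N k) - p))
     + (\<Sum>j\<le>min N k. 4 * (\<mu> ^ j / \<mu>) * \<sigma>v (2 * norm (v (k - j) - vbar (k - j))))"
proof -
  note Vf_bounds = VB[rule_format]
  note Vf_decr = VD[rule_format]
  note opt = OP[rule_format]
  define M where "M = min N k"
  define t where "t = k - M"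
  have kt: "k = t + M" unfolding t_def M_def by simp
  define Vs where "Vs i = Vf (x i) (xs i)" for i
  define d where "d i = \<sigma>v (norm (v i - vs i)) + \<sigma>y (norm (y i - h (xs i) (vs i)))" for i
  have d0: "0 \<le> d i" for i
    unfolding d_def using K_nonneg[OF \<sigma>v] K_nonneg[OF \<sigma>y] by (simp add: add_nonneg_nonneg)
  have solk: "x j \<in> X \<and> u j \<in> U \<and> v j \<in> V \<and> y j \<in> Y \<and>
          x (Suc j) = f (x j) (u j) (w j) \<and> y j = h (x j) (v j)" for j
    using sol unfolding is_solution_def by blast
  have fe1: "xs (Suc j) = f (xs j) (u j) (ws j)" if "t \<le> j" "j < k" for j
    using feas that unfolding mhe_feasible_def M_def t_def by auto
  have fe2: "xs j \<in> X \<and> vs j \<in> V \<and> h (xs j) (vs j) \<in> Y" if "t \<le> j" "j \<le> k" for j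
    using feas that unfolding mhe_feasible_def M_def t_def by auto
  have step: "Vs (t+i+1) \<le> \<mu> * Vs (t+i) + d (t+i) + d (t+i+1)" if "i < M" for i
  proof -
    define j where "j = t + i"
    have j: "t \<le> j" "j < k" "Suc j \<le> k" using that kt j_def by auto
    note A = solk[of j] solk[of "Suc j"] fe1[OF j(1,2)] fe2[of j] fe2[of "Suc j"]
    have "Vf (f (x j) (u j) (w j)) (f (xs j) (u j) (ws j)) \<le> \<mu> * Vf (x j) (xs j)
        + \<sigma>v (norm (v j - vs j)) + \<sigma>v (norm (v (Suc j) - vs (Suc j)))
        + \<sigma>y (norm (y j - h (xs j) (vs j)))
        + \<sigma>y (norm (h (f (x j) (u j) (w j)) (v (Suc j)) - h (f (xs j) (u j) (ws j)) (vs (Suc j))))"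
      using j A by (intro Vf_decr) auto
    then show ?thesis using A j unfolding Vs_def d_def j_def[symmetric] by auto
  qed
  have ch: "Vs (t+M) \<le> \<mu>^M * Vs t + (\<Sum>j\<le>M. cc \<mu> j * d (t+M-j))"
    by (rule chain[OF \<mu>(1) d0 step])
  have xk: "x k \<in> X" "xs k \<in> X" using solk[of k] fe2[of k] kt by auto
  have xt: "x t \<in> X" "xs t \<in> X" using solk[of t] fe2[of t] kt by auto
  have e1: "\<alpha>1 (norm (x k - xs k)) \<le> Vs k" using Vf_bounds[OF xk] Vs_def by auto
  have e2: "Vs t \<le> \<alpha>2 (2 * norm (x t - p)) + \<alpha>2 (2 * norm (xs t - p))"
  proof -
    have "Vs t \<le> \<alpha>2 (norm (x t - xs t))" using Vf_bounds[OF xt] Vs_def by auto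
    also have "\<dots> \<le> \<alpha>2 (2 * norm (x t - p)) + \<alpha>2 (2 * norm (xs t - p))"
      by (rule K_tri[OF \<alpha>2]) (rule tri3)
    finally show ?thesis .
  qed
  define Sv where "Sv = (\<Sum>j\<le>M. 2 * (\<mu> ^ j / \<mu>) * \<sigma>v (2 * norm (v (k - j) - vbar (k - j))))"
  define Sov where "Sov = (\<Sum>j\<le>M. 2 * (\<mu> ^ j / \<mu>) * \<sigma>v (2 * norm (vs (k - j) - vbar (k - j))))"
  define Soy where "Soy = (\<Sum>j\<le>M. 2 * (\<mu> ^ j / \<mu>) * \<sigma>y (norm (y (k - j) - h (xs (k - j)) (vs (k - j)))))"
  have e3: "(\<Sum>j\<le>M. cc \<mu> j * d (t+M-j)) \<le> Sv + Sov + Soy"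
  proof -
    have "(\<Sum>j\<le>M. cc \<mu> j * d (t+M-j)) \<le>
      (\<Sum>j\<le>M. 2 * (\<mu> ^ j / \<mu>) * (\<sigma>v (2 * norm (v (k - j) - vbar (k - j))) +
           \<sigma>v (2 * norm (vs (k - j) - vbar (k - j))) + \<sigma>y (norm (y (k - j) - h (xs (k - j)) (vs (k - j))))))"
    proof (rule sum_mono)
      fix j assume "j \<in> {..M}"
      have dd: "d (k - j) \<le> \<sigma>v (2 * norm (v (k - j) - vbar (k - j))) +
           \<sigma>v (2 * norm (vs (k - j) - vbar (k - j))) + \<sigma>y (norm (y (k - j) - h (xs (k - j)) (vs (k - j))))"
      proof -
        have "\<sigma>v (norm (v (k - j) - vs (k - j))) \<le> \<sigma>v (2 * norm (v (k - j) - vbar (k - j))) +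
           \<sigma>v (2 * norm (vs (k - j) - vbar (k - j)))"
          by (rule K_tri[OF \<sigma>v]) (rule tri3)
        then show ?thesis unfolding d_def by linarith
      qed
      show "cc \<mu> j * d (t + M - j) \<le> 2 * (\<mu> ^ j / \<mu>) * (\<sigma>v (2 * norm (v (k - j) - vbar (k - j))) +
           \<sigma>v (2 * norm (vs (k - j) - vbar (k - j))) + \<sigma>y (norm (y (k - j) - h (xs (k - j)) (vs (k - j)))))"
        using kt dd cc_le[OF \<mu>, of j] cc_nonneg[OF \<mu>(1), of j] d0[of "k - j"]
        by (intro mult_mono) auto
    qed
    also have "\<dots> = Sv + Sov + Soy" unfolding Sv_def Sov_def Soy_def
      by (simp add: distrib_left sum.distrib)
    finally show ?thesis .
  qed
  have feasT: "mhe_feasible f h X V Y N k u x v w"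
    unfolding mhe_feasible_def using solk by metis
  have pw: "\<mu> powi (int j - 1) = \<mu> ^ j / \<mu>" for j using powi_conv[of \<mu> j] \<mu> by simp
  have costT: "mhe_cost h \<mu> \<alpha>2 \<sigma>v \<sigma>y N k p vbar y x v = \<mu> ^ M * \<alpha>2 (2 * norm (x t - p)) + Sv"
  proof -
    have "y (k - j) - h (x (k - j)) (v (k - j)) = 0" for j using solk[of "k - j"] by simp
    then show ?thesis unfolding mhe_cost_def Sv_def M_def[symmetric] t_def[symmetric] pw
      using \<sigma>y by (simp add: class_K_def)
  qed
  have costO: "mhe_cost h \<mu> \<alpha>2 \<sigma>v \<sigma>y N k p vbar y xs vs = \<mu> ^ M * \<alpha>2 (2 * norm (xs t - p)) + Sov + Soy"
    unfolding mhe_cost_def Sov_def Soy_def M_def[symmetric] t_def[symmetric] pw by simp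
  have cmp: "\<mu> ^ M * \<alpha>2 (2 * norm (xs t - p)) + Sov + Soy \<le> \<mu> ^ M * \<alpha>2 (2 * norm (x t - p)) + Sv"
    using opt[OF feasT] costT costO by simp
  have "\<alpha>1 (norm (x k - xs k)) \<le> \<mu>^M * (\<alpha>2 (2 * norm (x t - p)) + \<alpha>2 (2 * norm (xs t - p))) + (Sv + Sov + Soy)"
  proof -
    have "\<mu>^M * Vs t \<le> \<mu>^M * (\<alpha>2 (2 * norm (x t - p)) + \<alpha>2 (2 * norm (xs t - p)))"
      using e2 \<mu> by (intro mult_left_mono) auto
    then show ?thesis using e1 ch kt e3 by simp
  qed
  also have "\<dots> \<le> 2 * (\<mu> ^ M * \<alpha>2 (2 * norm (x t - p)) + Sv)"
    using cmp by (simp add: distrib_left)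
  also have "\<dots> = 2 * \<mu> ^ M * \<alpha>2 (2 * norm (x t - p))
     + (\<Sum>j\<le>M. 4 * (\<mu> ^ j / \<mu>) * \<sigma>v (2 * norm (v (k - j) - vbar (k - j))))"
    unfolding Sv_def by (simp add: distrib_left sum_distrib_left mult.assoc)
  finally show ?thesis unfolding M_def t_def .
qed



lemma K_scale: "class_K a \<Longrightarrow> 0 < c \<Longrightarrow> class_K (\<lambda>r. c * a (2 * r))"
  unfolding class_K_def
proof (intro conjI)
  assume K: "continuous_on {0..} a \<and> a 0 = 0 \<and> strict_mono_on {0..} a" and c: "0 < c"
  have "continuous_on {0..} (\<lambda>r::real. a (2 * r))"
    by (rule continuous_on_compose2[of "{0..}" a "{0..}" "\<lambda>r. 2 * r"])
       (use K in \<open>auto intro!: continuous_intros\<close>)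
  then show "continuous_on {0..} (\<lambda>r. c * a (2 * r))" by (intro continuous_intros)
  show "c * a (2 * 0) = 0" using K by simp
  show "strict_mono_on {0..} (\<lambda>r. c * a (2 * r))"
  proof (rule strict_mono_onI)
    fix r s :: real assume "r \<in> {0..}" "s \<in> {0..}" "r < s"
    then have "a (2 * r) < a (2 * s)" using K by (intro strict_mono_onD[of "{0..}" a]) auto
    then show "c * a (2 * r) < c * a (2 * s)" using c by simp
  qed
qed

lemma KL_scale: "class_K a \<Longrightarrow> 0 < c \<Longrightarrow> 0 < l \<Longrightarrow> l < 1 \<Longrightarrow>
   class_KL (\<lambda>r k. c * l ^ k * a (2 * r))"
  unfolding class_KL_def
proof (intro conjI allI impI)
  fix k :: nat
  assume K: "class_K a" and c: "0 < c" and l: "0 < l" "l < 1"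
  show "class_K (\<lambda>r. c * l ^ k * a (2 * r))" using K_scale[OF K, of "c * l ^ k"] c l by simp
next
  fix r :: real
  assume K: "class_K a" and c: "0 < c" and l: "0 < l" "l < 1" and r: "0 \<le> r"
  have A: "0 \<le> a (2 * r)" using K_nonneg[OF K, of "2 * r"] r by simp
  show "antimono (\<lambda>k. c * l ^ k * a (2 * r))"
  proof (rule antimonoI)
    fix k k' :: nat assume "k \<le> k'"
    then have "l ^ k' \<le> l ^ k" using l by (intro power_decreasing) auto
    then show "c * l ^ k' * a (2 * r) \<le> c * l ^ k * a (2 * r)"
      using A c by (intro mult_right_mono mult_left_mono) auto
  qed
  have L0: "(\<lambda>k. l ^ k) \<longlonglongrightarrow> 0" using l by (intro LIMSEQ_power_zero) auto
  have "(\<lambda>k. c * l ^ k * a (2 * r)) \<longlonglongrightarrow> c * 0 * a (2 * r)"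
    using tendsto_mult_right[OF tendsto_mult_left[OF L0, of c], of "a (2 * r)"] by simp
  then show "(\<lambda>k. c * l ^ k * a (2 * r)) \<longlonglongrightarrow> 0" by simp
qed

lemma sKL_scale: "class_K a \<Longrightarrow> 0 < c \<Longrightarrow> 0 < l \<Longrightarrow> l < 1 \<Longrightarrow>
   summable_KL (\<lambda>r k. c * l ^ k * a (2 * r))"
  unfolding summable_KL_def
proof (intro conjI)
  assume K: "class_K a" and c: "0 < c" and l: "0 < l" "l < 1"
  show "class_KL (\<lambda>r k. c * l ^ k * a (2 * r))" using KL_scale K c l by blast
  show "\<exists>\<alpha>. class_K \<alpha> \<and> (\<forall>r\<ge>0. summable (\<lambda>k. c * l ^ k * a (2 * r)) \<and>
          (\<Sum>k. c * l ^ k * a (2 * r)) \<le> \<alpha> r)"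
  proof (intro exI conjI allI impI)
    show "class_K (\<lambda>r. c / (1 - l) * a (2 * r))" using K_scale[OF K, of "c / (1 - l)"] c l by simp
    fix r :: real assume r: "0 \<le> r"
    have "(\<lambda>k. l ^ k) sums (1 / (1 - l))" using l by (intro geometric_sums) auto
    then have "(\<lambda>k. c * l ^ k) sums (c * (1 / (1 - l)))" by (rule sums_mult)
    then have S: "(\<lambda>k. c * l ^ k * a (2 * r)) sums (c * (1 / (1 - l)) * a (2 * r))" by (rule sums_mult2)
    show "summable (\<lambda>k. c * l ^ k * a (2 * r))" using S by (rule sums_summable)
    show "(\<Sum>k. c * l ^ k * a (2 * r)) \<le> c / (1 - l) * a (2 * r)" using sums_unique[OF S] by simp
  qed
qed

theorem theorem3:
  fixes f :: "'x::euclidean_space \<Rightarrow> 'u::euclidean_space \<Rightarrow> 'w::euclidean_space \<Rightarrow> 'x"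
    and h :: "'x \<Rightarrow> 'v::euclidean_space \<Rightarrow> 'y::euclidean_space"
    and X :: "'x set" and U :: "'u set" and V :: "'v set" and Y :: "'y set"
    and Vf :: "'x \<Rightarrow> 'x \<Rightarrow> real"
    and \<alpha>1 \<alpha>2 \<sigma>v \<sigma>y :: "real \<Rightarrow> real" and \<mu> :: real and N :: nat
  assumes f_C1: "C1_fun (\<lambda>(x, u, w). f x u w)"
    and h_C1: "C1_fun (\<lambda>(x, v). h x v)"
    and detect: "strongly_nl_detectable f h X U V Y"
    and \<alpha>1: "class_Kinf \<alpha>1" and \<alpha>2: "class_Kinf \<alpha>2"
    and \<sigma>v: "class_K \<sigma>v" and \<sigma>y: "class_K \<sigma>y"
    and \<mu>: "0 < \<mu>" "\<mu> < 1"
    and Vf_nonneg: "\<And>x x'. x \<in> X \<Longrightarrow> x' \<in> X \<Longrightarrow> 0 \<le> Vf x x'"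
    and Vf_bounds: "\<And>x x'. x \<in> X \<Longrightarrow> x' \<in> X \<Longrightarrow>
          \<alpha>1 (norm (x - x')) \<le> Vf x x' \<and> Vf x x' \<le> \<alpha>2 (norm (x - x'))"
    and Vf_decr: "\<And>x u w v y x' w' v' y' vp vp'.
          x \<in> X \<Longrightarrow> u \<in> U \<Longrightarrow> v \<in> V \<Longrightarrow> y \<in> Y \<Longrightarrow>
          x' \<in> X \<Longrightarrow> v' \<in> V \<Longrightarrow> y' \<in> Y \<Longrightarrow> vp \<in> V \<Longrightarrow> vp' \<in> V \<Longrightarrow>
          y = h x v \<Longrightarrow> y' = h x' v' \<Longrightarrow>
          h (f x u w) vp \<in> Y \<Longrightarrow> h (f x' u w') vp' \<in> Y \<Longrightarrow>
          Vf (f x u w) (f x' u w') \<le> \<mu> * Vf x x' + \<sigma>v (norm (v - v')) + \<sigma>v (norm (vp - vp'))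
             + \<sigma>y (norm (y - y')) + \<sigma>y (norm (h (f x u w) vp - h (f x' u w') vp'))"
    and horizon: "\<exists>\<rho>. 0 < \<rho> \<and> \<rho> < 1 \<and>
          (\<forall>r>0. 2 * \<mu> ^ N * \<alpha>2 (2 * inv_into {0..} \<alpha>1 r) < \<rho> * r)"
  shows "\<exists>\<beta> \<beta>0 \<beta>v. class_Kinf \<beta> \<and> class_KL \<beta>0 \<and> summable_KL \<beta>v \<and>
     (\<forall>x u w v y xbar0 vbar xhat.
        is_solution f h X U V Y x u w v y \<longrightarrow> xbar0 \<in> X \<longrightarrow> (\<forall>i. vbar i \<in> V) \<longrightarrow>
        mhe_estimates f h X V Y \<mu> \<alpha>2 \<sigma>v \<sigma>y N xbar0 vbar u y xhat \<longrightarrow>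
        (\<forall>k. \<beta> (norm (x k - xhat k)) \<le> \<beta>0 (norm (x 0 - xbar0)) k +
               (\<Sum>i\<le>k. \<beta>v (norm (v (k - i) - vbar (k - i))) i)))"
proof -
  obtain \<rho> where rho: "0 < \<rho>" "\<rho> < 1"
    and hz: "\<And>r. r > 0 \<Longrightarrow> 2 * \<mu> ^ N * \<alpha>2 (2 * inv_into {0..} \<alpha>1 r) < \<rho> * r"
    using horizon by blast
  have K1: "class_K \<alpha>1" and K2: "class_K \<alpha>2" using \<alpha>1 \<alpha>2 by (auto simp: class_Kinf_def)
  define l where "l = max \<mu> (root (Suc N) \<rho>)"
  have rt: "0 < root (Suc N) \<rho>" "root (Suc N) \<rho> < 1" "root (Suc N) \<rho> ^ Suc N = \<rho>"
    using rho real_root_pow_pos2[of "Suc N" \<rho>] by (auto intro: real_root_gt_zero simp del: power_Suc)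
  have l: "0 < l" "l < 1" "\<mu> \<le> l" "\<rho> \<le> l ^ Suc N"
  proof -
    show "0 < l" "l < 1" "\<mu> \<le> l" using rt \<mu> by (auto simp: l_def)
    have "root (Suc N) \<rho> ^ Suc N \<le> l ^ Suc N"
      using rt by (intro power_mono) (auto simp: l_def)
    then show "\<rho> \<le> l ^ Suc N" using rt by simp
  qed
  define B where "B = 4 / (\<mu> * l ^ N * (1 - l))"
  have Bpos: "0 < B" unfolding B_def using l \<mu> by simp
  have hz2: "2 * \<mu> ^ N * \<alpha>2 (2 * e) \<le> \<rho> * \<alpha>1 e" if e: "0 \<le> e" for e
  proof (cases "e = 0")
    case True
    then show ?thesis using K1 K2 by (simp add: class_K_def)
  next
    case False
    then have ep: "0 < e" using e by simp
    have inj: "inj_on \<alpha>1 {0..}" using K1 by (auto simp: class_K_def intro: strict_mono_on_imp_inj_on)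
    have "inv_into {0..} \<alpha>1 (\<alpha>1 e) = e" using inj e by simp
    then show ?thesis using hz[of "\<alpha>1 e"] K_pos[OF K1 ep] by simp
  qed
  show ?thesis
  proof (rule exI[of _ \<alpha>1], rule exI[of _ "\<lambda>r k. 2 * l ^ k * \<alpha>2 (2 * r)"],
      rule exI[of _ "\<lambda>r i. B * l ^ i * \<sigma>v (2 * r)"], intro conjI allI impI)
    show "class_Kinf \<alpha>1" by (rule \<alpha>1)
    show "class_KL (\<lambda>r k. 2 * l ^ k * \<alpha>2 (2 * r))" using KL_scale[OF K2, of 2 l] l by simp
    show "summable_KL (\<lambda>r i. B * l ^ i * \<sigma>v (2 * r))" using sKL_scale[OF \<sigma>v Bpos l(1,2)] by simp
    fix x u w v y xbar0 vbar xhat k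
    assume sol: "is_solution f h X U V Y x u w v y" and xb: "xbar0 \<in> X" and vb: "\<forall>i. vbar i \<in> V"
      and est: "mhe_estimates f h X V Y \<mu> \<alpha>2 \<sigma>v \<sigma>y N xbar0 vbar u y xhat"
    have estk: "\<exists>xs vs ws. mhe_feasible f h X V Y N k u xs vs ws \<and>
           (\<forall>xs' vs' ws'. mhe_feasible f h X V Y N k u xs' vs' ws' \<longrightarrow>
              mhe_cost h \<mu> \<alpha>2 \<sigma>v \<sigma>y N k (if k - min N k = 0 then xbar0 else xhat (k - min N k)) vbar y xs vs
                \<le> mhe_cost h \<mu> \<alpha>2 \<sigma>v \<sigma>y N k (if k - min N k = 0 then xbar0 else xhat (k - min N k)) vbar y xs' vs') \<and>
           xhat k = xs k" for k
      using est unfolding mhe_estimates_def Let_def by blast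
    have VB: "\<forall>x x'. x \<in> X \<longrightarrow> x' \<in> X \<longrightarrow>
          \<alpha>1 (norm (x - x')) \<le> Vf x x' \<and> Vf x x' \<le> \<alpha>2 (norm (x - x'))" using Vf_bounds by blast
    have VD: "\<forall>x u w v y x' w' v' y' vp vp'.
          x \<in> X \<longrightarrow> u \<in> U \<longrightarrow> v \<in> V \<longrightarrow> y \<in> Y \<longrightarrow>
          x' \<in> X \<longrightarrow> v' \<in> V \<longrightarrow> y' \<in> Y \<longrightarrow> vp \<in> V \<longrightarrow> vp' \<in> V \<longrightarrow>
          y = h x v \<longrightarrow> y' = h x' v' \<longrightarrow>
          h (f x u w) vp \<in> Y \<longrightarrow> h (f x' u w') vp' \<in> Y \<longrightarrow>
          Vf (f x u w) (f x' u w') \<le> \<mu> * Vf x x' + \<sigma>v (norm (v - v')) + \<sigma>v (norm (vp - vp'))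
             + \<sigma>y (norm (y - y')) + \<sigma>y (norm (h (f x u w) vp - h (f x' u w') vp'))"
      using Vf_decr by blast
    note win = window[OF K1 K2 \<sigma>v \<sigma>y \<mu> VB VD sol]
    show "\<alpha>1 (norm (x k - xhat k)) \<le> 2 * l ^ k * \<alpha>2 (2 * norm (x 0 - xbar0)) +
        (\<Sum>i\<le>k. B * l ^ i * \<sigma>v (2 * norm (v (k - i) - vbar (k - i))))"
    proof (rule recursion[OF \<mu> rho _ _ l B_def, where a = "\<lambda>k. \<alpha>1 (norm (x k - xhat k))"
          and s = "\<lambda>i. \<sigma>v (2 * norm (v i - vbar i))"])
      show "0 \<le> \<alpha>2 (2 * norm (x 0 - xbar0))" using K_nonneg[OF K2] by simp
      show "0 \<le> \<sigma>v (2 * norm (v i - vbar i))" for i using K_nonneg[OF \<sigma>v] by simp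
      show "\<alpha>1 (norm (x k - xhat k)) \<le> 2 * \<mu> ^ k * \<alpha>2 (2 * norm (x 0 - xbar0)) +
          (\<Sum>j\<le>k. 4 * (\<mu> ^ j / \<mu>) * \<sigma>v (2 * norm (v (k - j) - vbar (k - j))))" if kN: "k \<le> N" for k
      proof -
        have mk: "min N k = k" using kN by simp
        obtain xs vs ws where F: "mhe_feasible f h X V Y N k u xs vs ws"
          and O: "\<forall>xs' vs' ws'. mhe_feasible f h X V Y N k u xs' vs' ws' \<longrightarrow>
              mhe_cost h \<mu> \<alpha>2 \<sigma>v \<sigma>y N k xbar0 vbar y xs vs \<le> mhe_cost h \<mu> \<alpha>2 \<sigma>v \<sigma>y N k xbar0 vbar y xs' vs'"
          and xh: "xhat k = xs k"
        proof -
          obtain xs vs ws where F: "mhe_feasible f h X V Y N k u xs vs ws"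
            and O': "\<forall>xs' vs' ws'. mhe_feasible f h X V Y N k u xs' vs' ws' \<longrightarrow>
              mhe_cost h \<mu> \<alpha>2 \<sigma>v \<sigma>y N k (if k - min N k = 0 then xbar0 else xhat (k - min N k)) vbar y xs vs
                \<le> mhe_cost h \<mu> \<alpha>2 \<sigma>v \<sigma>y N k (if k - min N k = 0 then xbar0 else xhat (k - min N k)) vbar y xs' vs'"
            and xh: "xhat k = xs k" using estk[of k] by blast
          have pr: "(if k - min N k = 0 then xbar0 else xhat (k - min N k)) = xbar0" using mk by simp
          show thesis using that[OF F _ xh] O' unfolding pr by blast
        qed
        show ?thesis using win[OF F O] xh mk by simp
      qed
      show "\<alpha>1 (norm (x k - xhat k)) \<le> \<rho> * \<alpha>1 (norm (x (k - N) - xhat (k - N))) +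
          (\<Sum>j\<le>N. 4 * (\<mu> ^ j / \<mu>) * \<sigma>v (2 * norm (v (k - j) - vbar (k - j))))" if kN: "N < k" for k
      proof -
        have mk: "min N k = N" using kN by simp
        have nz: "k - N \<noteq> 0" using kN by simp
        obtain xs vs ws where F: "mhe_feasible f h X V Y N k u xs vs ws"
          and O: "\<forall>xs' vs' ws'. mhe_feasible f h X V Y N k u xs' vs' ws' \<longrightarrow>
              mhe_cost h \<mu> \<alpha>2 \<sigma>v \<sigma>y N k (xhat (k - N)) vbar y xs vs
                \<le> mhe_cost h \<mu> \<alpha>2 \<sigma>v \<sigma>y N k (xhat (k - N)) vbar y xs' vs'"
          and xh: "xhat k = xs k"
        proof -
          obtain xs vs ws where F: "mhe_feasible f h X V Y N k u xs vs ws"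
            and O': "\<forall>xs' vs' ws'. mhe_feasible f h X V Y N k u xs' vs' ws' \<longrightarrow>
              mhe_cost h \<mu> \<alpha>2 \<sigma>v \<sigma>y N k (if k - min N k = 0 then xbar0 else xhat (k - min N k)) vbar y xs vs
                \<le> mhe_cost h \<mu> \<alpha>2 \<sigma>v \<sigma>y N k (if k - min N k = 0 then xbar0 else xhat (k - min N k)) vbar y xs' vs'"
            and xh: "xhat k = xs k" using estk[of k] by blast
          have pr: "(if k - min N k = 0 then xbar0 else xhat (k - min N k)) = xhat (k - N)" using mk nz by simp
          show thesis using that[OF F _ xh] O' unfolding pr by blast
        qed
        have "\<alpha>1 (norm (x k - xhat k)) \<le> 2 * \<mu> ^ N * \<alpha>2 (2 * norm (x (k - N) - xhat (k - N))) +
          (\<Sum>j\<le>N. 4 * (\<mu> ^ j / \<mu>) * \<sigma>v (2 * norm (v (k - j) - vbar (k - j))))"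
          using win[OF F O] xh mk by simp
        then show ?thesis using hz2[of "norm (x (k - N) - xhat (k - N))"] by simp
      qed
    qed
  qed
qed

end
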